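(* Let $A$ be an MV-algebra and $\operatorname{Der}(A)$ the set of $(\odot,\vee)$-derivations on $A$. Then: (1) if $|A|\ge 3$ then $|\operatorname{Der}(A)|\ge 5$; (2) if $|A|\ge 4$ then $|\operatorname{Der}(A)|\ge 7$; (3) if $|A|\ge 5$ then $|\operatorname{Der}(A)|\ge 13$.
   Context: An MV-algebra is an algebra $(A,\oplus,{}^*,0)$ of type $(2,1,0)$ satisfying: $x\oplus(y\oplus z)=(x\oplus y)\oplus z$, $x\oplus y=y\oplus x$, $x\oplus 0=x$, $x^{**}=x$, $x\oplus 0^*=0^*$, $(x^*\oplus y)^*\oplus y=(y^*\oplus x)^*\oplus x$. Put $1=0^*$ and $x\odot y=(x^*\oplus y^* )^*$. The natural order is $x\le y$ iff $x^*\oplus y=1$, with lattice operations $x\vee y=(x\odot y^* )\oplus y$, $x\wedge y=x\odot(x^*\oplus y)$. A $(\odot,\vee)$-derivation on $A$ is a map $d:A\to A$ with $d(x\odot y)=(d(x)\odot y)\vee(x\odot d(y))$ for all $x,y\in A$. *)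

theory Defs
  imports Main
begin

definition mv_algebra :: "('a \<Rightarrow> 'a \<Rightarrow> 'a) \<Rightarrow> ('a \<Rightarrow> 'a) \<Rightarrow> 'a \<Rightarrow> bool" where
  "mv_algebra oplus neg zero \<longleftrightarrow>
     (\<forall>x y z. oplus x (oplus y z) = oplus (oplus x y) z) \<and>
     (\<forall>x y. oplus x y = oplus y x) \<and>
     (\<forall>x. oplus x zero = x) \<and>
     (\<forall>x. neg (neg x) = x) \<and>
     (\<forall>x. oplus x (neg zero) = neg zero) \<and>
     (\<forall>x y. oplus (neg (oplus (neg x) y)) y = oplus (neg (oplus (neg y) x)) x)"

definition mv_odot :: "('a \<Rightarrow> 'a \<Rightarrow> 'a) \<Rightarrow> ('a \<Rightarrow> 'a) \<Rightarrow> 'a \<Rightarrow> 'a \<Rightarrow> 'a" where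
  "mv_odot oplus neg x y = neg (oplus (neg x) (neg y))"

definition mv_join :: "('a \<Rightarrow> 'a \<Rightarrow> 'a) \<Rightarrow> ('a \<Rightarrow> 'a) \<Rightarrow> 'a \<Rightarrow> 'a \<Rightarrow> 'a" where
  "mv_join oplus neg x y = oplus (mv_odot oplus neg x (neg y)) y"

definition odot_join_derivation ::
  "('a \<Rightarrow> 'a \<Rightarrow> 'a) \<Rightarrow> ('a \<Rightarrow> 'a) \<Rightarrow> ('a \<Rightarrow> 'a) \<Rightarrow> bool" where
  "odot_join_derivation oplus neg d \<longleftrightarrow>
     (\<forall>x y. d (mv_odot oplus neg x y) =
        mv_join oplus neg (mv_odot oplus neg (d x) y) (mv_odot oplus neg x (d y)))"

definition Der :: "('a \<Rightarrow> 'a \<Rightarrow> 'a) \<Rightarrow> ('a \<Rightarrow> 'a) \<Rightarrow> ('a \<Rightarrow> 'a) set" where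
  "Der oplus neg = {d. odot_join_derivation oplus neg d}"

definition card_ge :: "nat \<Rightarrow> 'b set \<Rightarrow> bool" where
  "card_ge n S \<longleftrightarrow> infinite S \<or> n \<le> card S"

end

theory Submission imports Defs begin

locale mv =
  fixes pl :: "'a \<Rightarrow> 'a \<Rightarrow> 'a" (infixl "+++" 65) and ng :: "'a \<Rightarrow> 'a" and z :: 'a
  assumes mv: "mv_algebra pl ng z"
begin

abbreviation one where "one \<equiv> ng z"
abbreviation od (infixl "***" 70) where "od x y \<equiv> mv_odot pl ng x y"
abbreviation jn where "jn x y \<equiv> mv_join pl ng x y"
abbreviation le where "le x y \<equiv> ng x +++ y = one"

lemma ax: "x +++ (y +++ w) = (x +++ y) +++ w" "x +++ y = y +++ x" "x +++ z = x"
  "ng (ng x) = x" "x +++ one = one" "ng (ng x +++ y) +++ y = ng (ng y +++ x) +++ x"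
  using mv unfolding mv_algebra_def by blast+

lemma ac: "x +++ (y +++ w) = y +++ (x +++ w)"
  by (metis ax(1) ax(2))

lemma zr[simp]: "x +++ z = x" by (rule ax(3))
lemma zl[simp]: "z +++ x = x" by (metis ax(2) ax(3))
lemma oner[simp]: "x +++ one = one" by (rule ax(5))
lemma onel[simp]: "one +++ x = one" by (metis ax(2) ax(5))
lemma nn[simp]: "ng (ng x) = x" by (rule ax(4))
lemma compl: "ng x +++ x = one"
proof -
  have "ng (ng one +++ x) +++ x = ng (ng x +++ one) +++ one" by (rule ax(6))
  thus ?thesis by simp
qed
lemma compl2: "x +++ ng x = one" using compl ax(2) by metis

lemma ng_inj: "ng x = ng y \<Longrightarrow> x = y" by (metis nn)

lemma od_def': "x *** y = ng (ng x +++ ng y)" by (simp add: mv_odot_def)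
lemma jn_def': "jn x y = ng (ng x +++ y) +++ y" by (simp add: mv_join_def mv_odot_def)
lemma jn_comm: "jn x y = jn y x" by (simp add: jn_def' ax(6))

lemma od_comm: "x *** y = y *** x" by (simp add: od_def' ax(2))
lemma od_assoc: "x *** y *** w = x *** (y *** w)" by (simp add: od_def' ax(1))
lemma od_one[simp]: "x *** one = x" "one *** x = x" by (simp_all add: od_def')
lemma od_zero[simp]: "x *** z = z" "z *** x = z"
  by (simp_all add: od_def')

lemma le_refl: "le x x" by (rule compl)
lemma le_antisym: "le x y \<Longrightarrow> le y x \<Longrightarrow> x = y"
  by (metis jn_def' jn_comm zl nn)
lemma jn_le: "le u v \<Longrightarrow> jn u v = v" by (simp add: jn_def')
lemma jn_le2: "le v u \<Longrightarrow> jn u v = u" using jn_le jn_comm by metis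
lemma jn_idem[simp]: "jn v v = v" using jn_le le_refl by blast
lemma od_le: "le (x *** y) x"
proof -
  have "ng (x *** y) +++ x = (ng x +++ ng y) +++ x" by (simp add: od_def')
  also have "\<dots> = ng y +++ (ng x +++ x)" by (metis ax(1) ax(2))
  finally show ?thesis by (simp add: compl)
qed
lemma od_le2: "le (x *** y) y" using od_le od_comm by metis
lemma od_one_iff: "x *** y = one \<Longrightarrow> x = one"
  using od_le[of x y] by simp
lemma mono: "le b a \<Longrightarrow> le (b *** y) (a *** y)"
proof -
  assume h: "le b a"
  have "ng (b *** y) +++ (a *** y) = ng b +++ (ng y +++ ng (ng a +++ ng y))"
    by (simp add: od_def' ax(1))
  also have "ng y +++ ng (ng a +++ ng y) = ng (ng (ng y) +++ a) +++ a"
    using ax(6)[of a "ng y"] by (simp add: ax(2))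
  also have "ng b +++ (ng (ng (ng y) +++ a) +++ a) = (ng b +++ a) +++ ng (ng (ng y) +++ a)"
    by (metis ax(1) ax(2))
  finally show ?thesis using h by simp
qed
lemma od_zero_le: "x *** ng y = z \<Longrightarrow> le x y"
  by (simp add: od_def') (metis nn)
lemma od_compl: "x *** ng x = z" by (simp add: od_def' compl)

definition D :: "'a \<Rightarrow> 'a \<Rightarrow> 'a \<Rightarrow> 'a" where
  "D a b = (\<lambda>x. if x = one then b else a *** x)"

lemma D_der: assumes "le b a" shows "odot_join_derivation pl ng (D a b)"
  unfolding odot_join_derivation_def
proof (intro allI)
  fix x y
  show "D a b (x *** y) = jn (D a b x *** y) (x *** D a b y)"
  proof (cases "x = one")
    case True
    then show ?thesis
    proof (cases "y = one")
      case True
      with \<open>x = one\<close> show ?thesis by (simp add: D_def)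
    next
      case False
      then show ?thesis using True mono[OF assms, of y]
        by (simp add: D_def jn_le)
    qed
  next
    case False
    then show ?thesis
    proof (cases "y = one")
      case True
      then show ?thesis using False mono[OF assms, of x]
        by (simp add: D_def jn_le2 od_comm)
    next
      case f2: False
      have "x *** y \<noteq> one" using False od_one_iff by blast
      have e2: "x *** (a *** y) = a *** x *** y"
        by (simp only: od_assoc[symmetric] od_comm[of x a])
      show ?thesis using False f2 \<open>x *** y \<noteq> one\<close>
        by (simp only: D_def if_False e2 od_assoc jn_idem)
    qed
  qed
qed


lemma D_one[simp]: "D a b one = b" by (simp add: D_def)
lemma D_other: "x \<noteq> one \<Longrightarrow> D a b x = a *** x" by (simp add: D_def)

lemma ng_eq_one: "ng a = one \<Longrightarrow> a = z" by (metis nn)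
lemma ng_eq_z: "ng a = z \<Longrightarrow> a = one" by (metis nn)

lemma D_inj:
  assumes "a \<noteq> z" "a' \<noteq> z" "D a b = D a' b'"
  shows "a = a' \<and> b = b'"
proof -
  have "b = b'" using assms(3) by (metis D_one)
  have 1: "ng a \<noteq> one" using assms(1) ng_eq_one by blast
  have 2: "ng a' \<noteq> one" using assms(2) ng_eq_one by blast
  have "a' *** ng a = z" using assms(3) 1 D_other[OF 1, of a b] D_other[OF 1, of a' b']
    by (metis od_compl)
  hence "le a' a" by (rule od_zero_le)
  moreover have "a *** ng a' = z" using assms(3) 2 D_other[OF 2, of a b] D_other[OF 2, of a' b']
    by (metis od_compl)
  hence "le a a'" by (rule od_zero_le)
  ultimately have "a = a'" using le_antisym by blast
  with \<open>b = b'\<close> show ?thesis by blast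
qed

definition SP :: "('a \<times> 'a) set" where
  "SP = {(a,b). a \<noteq> z \<and> a \<noteq> one \<and> b \<noteq> z \<and> b \<noteq> one \<and> b \<noteq> a \<and> le b a}"

definition PP :: "('a \<times> 'a) set" where
  "PP = {(a,b). a \<noteq> z \<and> le b a}"

lemma D_der': "p \<in> PP \<Longrightarrow> case_prod D p \<in> Der pl ng"
  unfolding PP_def Der_def by (auto intro: D_der)

lemma z_ne_one: assumes "c \<noteq> z" shows "z \<noteq> one"
proof
  assume "z = one"
  hence "c = one" by (metis zr oner)
  moreover have "z = one" by fact
  ultimately show False using assms by simp
qed

lemma count:
  assumes fin: "finite (UNIV :: 'a set)" and n2: "card (UNIV :: 'a set) \<ge> 2"
    and Q: "Q \<subseteq> SP" and ZD: "Z \<subseteq> Der pl ng" and Zd: "Z \<inter> (case_prod D) ` PP = {}"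
    and Zf: "finite Z"
  shows "card_ge (3 * card (UNIV :: 'a set) - 4 + card Q + card Z) (Der pl ng)"
proof -
  let ?n = "card (UNIV :: 'a set)"
  obtain c :: 'a where c: "c \<noteq> z"
  proof -
    have "\<not> (UNIV :: 'a set) \<subseteq> {z}" using n2
      by (metis card.empty card.insert card_mono empty_iff finite.intros not_less_eq_eq numeral_2_eq_2 One_nat_def finite_insert)
    thus ?thesis using that by blast
  qed
  have zo: "z \<noteq> one" using z_ne_one[OF c] .
  define M where "M = (UNIV :: 'a set) - {z, one}"
  define P1 where "P1 = (\<lambda>a. (a, z)) ` (UNIV - {z})"
  define P2 where "P2 = (\<lambda>a. (a, a)) ` (UNIV - {z})"
  define P3 where "P3 = (\<lambda>b. (one, b)) ` M"
  have finP: "finite (UNIV :: ('a \<times> 'a) set)" using fin by (simp add: finite_Prod_UNIV)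
  have cP1: "card P1 = ?n - 1" unfolding P1_def
    by (subst card_image) (auto simp: inj_on_def fin card_Diff_singleton)
  have cP2: "card P2 = ?n - 1" unfolding P2_def
    by (subst card_image) (auto simp: inj_on_def fin card_Diff_singleton)
  have cM: "card M = ?n - 2" unfolding M_def using zo fin
    by (subst card_Diff_subset) auto
  have cP3: "card P3 = ?n - 2" unfolding P3_def
    by (subst card_image) (auto simp: inj_on_def cM)
  have d12: "P1 \<inter> P2 = {}" unfolding P1_def P2_def by auto
  have d3: "(P1 \<union> P2) \<inter> P3 = {}" unfolding P1_def P2_def P3_def M_def using zo by auto
  have d4: "(P1 \<union> P2 \<union> P3) \<inter> Q = {}" using Q unfolding P1_def P2_def P3_def M_def SP_def by auto
  have fQ: "finite Q" using finP by (rule finite_subset[rotated]) simp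
  have cU: "card (P1 \<union> P2 \<union> P3 \<union> Q) = card P1 + card P2 + card P3 + card Q"
    using d12 d3 d4 finP fQ
    by (simp add: card_Un_disjoint finite_subset[OF subset_UNIV])
  have sub: "P1 \<union> P2 \<union> P3 \<union> Q \<subseteq> PP"
  proof -
    have "P1 \<subseteq> PP" unfolding P1_def PP_def by auto
    moreover have "P2 \<subseteq> PP" unfolding P2_def PP_def using le_refl by auto
    moreover have "P3 \<subseteq> PP" unfolding P3_def PP_def using zo by auto
    moreover have "SP \<subseteq> PP" unfolding SP_def PP_def by auto
    ultimately show ?thesis using Q by blast
  qed
  have finPP: "finite PP" using finP by (rule finite_subset[rotated]) simp
  have injD: "inj_on (case_prod D) PP"
  proof (rule inj_onI)
    fix p q assume h: "p \<in> PP" "q \<in> PP" "case_prod D p = case_prod D q"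
    obtain a b where p: "p = (a,b)" by fastforce
    obtain a' b' where q: "q = (a',b')" by fastforce
    have "a \<noteq> z" "a' \<noteq> z" using h p q unfolding PP_def by auto
    moreover have "D a b = D a' b'" using h(3) p q by simp
    ultimately have "a = a' \<and> b = b'" by (rule D_inj)
    thus "p = q" using p q by simp
  qed
  have "card PP \<ge> 3 * ?n - 4 + card Q" using card_mono[OF finPP sub] cU cP1 cP2 cP3 n2 by linarith
  hence cPP: "card ((case_prod D) ` PP) \<ge> 3 * ?n - 4 + card Q" using card_image[OF injD] by simp
  have cT: "card ((case_prod D) ` PP \<union> Z) = card ((case_prod D) ` PP) + card Z"
    using Zd Zf finPP by (simp add: card_Un_disjoint Int_commute)
  have subT: "(case_prod D) ` PP \<union> Z \<subseteq> Der pl ng" using ZD D_der' by auto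
  show ?thesis
  proof (cases "finite (Der pl ng)")
    case True
    then show ?thesis unfolding card_ge_def using card_mono[OF True subT] cT cPP by linarith
  qed (simp add: card_ge_def)
qed


lemma pair_from:
  assumes a: "a \<noteq> z" "a \<noteq> one" and x: "x \<noteq> one" "a *** x \<noteq> z" "x \<noteq> a"
  shows "\<exists>p. p \<in> SP"
proof (cases "a *** x = a")
  case False
  have "a *** x \<noteq> one" using a(2) od_one_iff by blast
  hence "(a, a *** x) \<in> SP" using a x False od_le[of a x] unfolding SP_def by auto
  thus ?thesis by blast
next
  case True
  have "le a x" using od_le2[of a x] True by simp
  moreover have "x \<noteq> z" using x(2) by auto
  ultimately have "(x, a) \<in> SP" using a x unfolding SP_def by auto
  thus ?thesis by blast
qed

lemma exists_pair:
  assumes "p \<noteq> z" "p \<noteq> one" "q \<noteq> z" "q \<noteq> one" "r \<noteq> z" "r \<noteq> one"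
    "p \<noteq> q" "q \<noteq> r" "p \<noteq> r"
  shows "\<exists>s. s \<in> SP"
proof -
  have nq: "ng q \<noteq> one" "ng r \<noteq> one" using assms ng_eq_one by blast+
  show ?thesis
  proof (cases "p *** ng q = z")
    case True
    hence "(q, p) \<in> SP" using od_zero_le[OF True] assms unfolding SP_def by auto
    thus ?thesis by blast
  next
    case F1: False
    show ?thesis
    proof (cases "p *** ng r = z")
      case True
      hence "(r, p) \<in> SP" using od_zero_le[OF True] assms unfolding SP_def by auto
      thus ?thesis by blast
    next
      case F2: False
      show ?thesis
      proof (cases "ng q = p")
        case False
        thus ?thesis using pair_from[OF assms(1,2) nq(1) F1] by blast
      next
        case True
        show ?thesis
        proof (cases "ng r = p")
          case False
          thus ?thesis using pair_from[OF assms(1,2) nq(2) F2] by blast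
        next
          case True2: True
          have "q = r" using True True2 ng_inj by metis
          thus ?thesis using assms by blast
        qed
      qed
    qed
  qed
qed

lemma big:
  assumes fin: "finite (UNIV :: 'a set)" and n5: "card (UNIV :: 'a set) \<ge> 5"
  shows "card_ge (3 * card (UNIV :: 'a set) - 2) (Der pl ng)"
proof -
  let ?M = "(UNIV :: 'a set) - {z, one}"
  have e: "card ?M = card (UNIV :: 'a set) - card {z,one}" by (rule card_Diff_subset) auto
  have "card {z,one} \<le> 2" by (simp add: card_insert_if)
  hence "card ?M \<ge> 3" using n5 e by linarith
  then obtain T where T: "T \<subseteq> ?M" "card T = 3" by (metis obtain_subset_with_card_n)
  then obtain p q r where pqr: "T = {p,q,r}" "p \<noteq> q" "q \<noteq> r" "p \<noteq> r"
    using card_3_iff by metis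
  have M: "p \<noteq> z" "p \<noteq> one" "q \<noteq> z" "q \<noteq> one" "r \<noteq> z" "r \<noteq> one"
    using T(1) pqr(1) by auto
  have n2: "card (UNIV :: 'a set) \<ge> 2" using n5 by simp
  show ?thesis
  proof (cases "\<exists>a0. a0 \<noteq> z \<and> (\<forall>x. x \<noteq> one \<longrightarrow> a0 *** x = z)")
    case True
    then obtain a0 where a0: "a0 \<noteq> z" "\<forall>x. x \<noteq> one \<longrightarrow> a0 *** x = z" by blast
    have a01: "a0 \<noteq> one" using a0(2) M(1,2) by force
    have lea: "le a0 c" if "c \<noteq> z" for c
    proof -
      have "ng c \<noteq> one" using that ng_eq_one by blast
      hence "a0 *** ng c = z" using a0(2) by blast
      thus ?thesis by (rule od_zero_le)
    qed
    obtain c1 c2 where c: "c1 \<noteq> z" "c1 \<noteq> one" "c2 \<noteq> z" "c2 \<noteq> one" "c1 \<noteq> c2"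
      "c1 \<noteq> a0" "c2 \<noteq> a0"
    proof (cases "a0 = p")
      case True
      thus ?thesis using that[of q r] M pqr(2-4) by blast
    next
      case F: False
      show ?thesis
      proof (cases "a0 = q")
        case True
        thus ?thesis using that[of p r] M pqr(2-4) by blast
      next
        case False
        thus ?thesis using that[of p q] M pqr(2-4) F by blast
      qed
    qed
    let ?Q = "{(c1, a0), (c2, a0)}"
    have Q: "?Q \<subseteq> SP" unfolding SP_def using c a0(1) a01 lea by auto
    have cQ: "card ?Q = 2" using c by simp
    have "card_ge (3 * card (UNIV :: 'a set) - 4 + card ?Q + card ({} :: ('a \<Rightarrow> 'a) set)) (Der pl ng)"
      by (rule count[OF fin n2 Q]) auto
    moreover have "3 * card (UNIV :: 'a set) - 4 + card ?Q + card ({} :: ('a \<Rightarrow> 'a) set) = 3 * card (UNIV :: 'a set) - 2"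
      using cQ n5 by simp
    ultimately show ?thesis by simp
  next
    case False
    obtain s where s: "s \<in> SP" using exists_pair[OF M pqr(2-4)] by blast
    have Q: "{s} \<subseteq> SP" using s by simp
    have ZD: "{D z z} \<subseteq> Der pl ng" using D_der[of z z] le_refl unfolding Der_def by simp
    have Zd: "{D z z} \<inter> (case_prod D) ` PP = {}"
    proof (rule ccontr)
      assume "{D z z} \<inter> (case_prod D) ` PP \<noteq> {}"
      then obtain a b where ab: "(a,b) \<in> PP" "D z z = D a b" by auto
      have "a \<noteq> z" using ab(1) unfolding PP_def by simp
      moreover have "\<forall>x. x \<noteq> one \<longrightarrow> a *** x = z"
        using ab(2) D_other by (metis od_zero(2))
      ultimately show False using False by blast
    qed
    have "card_ge (3 * card (UNIV :: 'a set) - 4 + card {s} + card {D z z}) (Der pl ng)"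
      by (rule count[OF fin n2 Q ZD Zd]) simp
    moreover have "3 * card (UNIV :: 'a set) - 4 + card {s} + card {D z z} = 3 * card (UNIV :: 'a set) - 2"
      using n5 by simp
    ultimately show ?thesis by simp
  qed
qed

end

theorem corollary3p15:
  fixes oplus :: "'a \<Rightarrow> 'a \<Rightarrow> 'a" and neg :: "'a \<Rightarrow> 'a" and zero :: 'a
  assumes "mv_algebra oplus neg zero"
  shows "(card_ge 3 (UNIV :: 'a set) \<longrightarrow> card_ge 5 (Der oplus neg)) \<and>
         (card_ge 4 (UNIV :: 'a set) \<longrightarrow> card_ge 7 (Der oplus neg)) \<and>
         (card_ge 5 (UNIV :: 'a set) \<longrightarrow> card_ge 13 (Der oplus neg))"
proof -
  interpret mv oplus neg zero by (rule mv.intro[OF assms])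
  show ?thesis
  proof (cases "finite (UNIV :: 'a set)")
    case False
    have "inj (\<lambda>a. D a a)" by (rule injI) (metis D_one)
    moreover have "range (\<lambda>a. D a a) \<subseteq> Der oplus neg"
      using D_der le_refl unfolding Der_def by auto
    ultimately have "infinite (Der oplus neg)"
      using False by (meson finite_imageD finite_subset)
    thus ?thesis by (simp add: card_ge_def)
  next
    case fin: True
    let ?n = "card (UNIV :: 'a set)"
    have c3: "card_ge (3 * ?n - 4) (Der oplus neg)" if "?n \<ge> 3"
      using count[OF fin, of "{}" "{}"] that by simp
    have mono_ge: "card_ge m S \<Longrightarrow> k \<le> m \<Longrightarrow> card_ge k S" for m k and S :: "('a \<Rightarrow> 'a) set"
      by (auto simp: card_ge_def)
    have 1: "card_ge 3 (UNIV :: 'a set) \<longrightarrow> card_ge 5 (Der oplus neg)"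
    proof
      assume "card_ge 3 (UNIV :: 'a set)"
      hence h: "?n \<ge> 3" using fin by (simp add: card_ge_def)
      show "card_ge 5 (Der oplus neg)" by (rule mono_ge[OF c3[OF h]]) (use h in linarith)
    qed
    have 2: "card_ge 4 (UNIV :: 'a set) \<longrightarrow> card_ge 7 (Der oplus neg)"
    proof
      assume "card_ge 4 (UNIV :: 'a set)"
      hence h: "?n \<ge> 4" using fin by (simp add: card_ge_def)
      show "card_ge 7 (Der oplus neg)" by (rule mono_ge[OF c3]) (use h in linarith)+
    qed
    have 3: "card_ge 5 (UNIV :: 'a set) \<longrightarrow> card_ge 13 (Der oplus neg)"
    proof
      assume "card_ge 5 (UNIV :: 'a set)"
      hence h: "?n \<ge> 5" using fin by (simp add: card_ge_def)
      show "card_ge 13 (Der oplus neg)" by (rule mono_ge[OF big[OF fin h]]) (use h in linarith)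
    qed
    show ?thesis using 1 2 3 by blast
  qed
qed

end
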